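(* Let $(\mathfrak{g},[\cdot,\cdot],\langle\cdot,\cdot\rangle)$ be a nilpotent quadratic Lie algebra of dimension $n$. If $\mathfrak{g}$ admits an $(n-1)$-symplectic structure, then $\mathfrak{g}$ is abelian.
   Context: A quadratic Lie algebra is a finite-dimensional real Lie algebra $\mathfrak{g}$ endowed with a nondegenerate symmetric bilinear form $\langle\cdot,\cdot\rangle$ which is invariant: $\langle [u,v],w\rangle+\langle [u,w],v\rangle=0$ for all $u,v,w\in\mathfrak{g}$. A $k$-symplectic structure on a real Lie algebra $\mathfrak{g}$ of dimension $m(k+1)$ ($m,k\ge1$) is a pair consisting of a Lie subalgebra $\mathfrak{h}\subset\mathfrak{g}$ of dimension $mk$ and a family $(\theta_1,\dots,\theta_k)$ of skew-symmetric bilinear forms on $\mathfrak{g}$ such that: (i) $\bigcap_{i=1}^k\ker\theta_i=\{0\}$, where $\ker\theta_i=\{u\in\mathfrak{g}:\theta_i(u,v)=0\ \forall v\in\mathfrak{g}\}$; (ii) each $\theta_i$ is a 2-cocycle: $\theta_i([u,v],w)+\theta_i([v,w],u)+\theta_i([w,u],v)=0$ for all $u,v,w$; (iii) $\theta_i(u,v)=0$ for all $u,v\in\mathfrak{h}$ and all $i$. (Thus an $(n-1)$-symplectic structure on an $n$-dimensional Lie algebra has $\dim\mathfrak{h}=n-1$.) *)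

theory Defs
  imports "HOL-Analysis.Analysis"
begin

text \<open>A finite-dimensional real Lie algebra is modelled as a type of class
  euclidean_space (i.e. a finite-dimensional real vector space; its inner
  product plays no role) together with a bracket.\<close>

definition lie_algebra :: "('a::euclidean_space \<Rightarrow> 'a \<Rightarrow> 'a) \<Rightarrow> bool" where
  "lie_algebra br \<longleftrightarrow> bilinear br \<and> (\<forall>x. br x x = 0) \<and>
     (\<forall>x y z. br x (br y z) + br y (br z x) + br z (br x y) = 0)"

fun lower_central :: "('a::euclidean_space \<Rightarrow> 'a \<Rightarrow> 'a) \<Rightarrow> nat \<Rightarrow> 'a set" where
  "lower_central br 0 = UNIV"
| "lower_central br (Suc k) = span {br x y | x y. y \<in> lower_central br k}"

definition nilpotent_lie :: "('a::euclidean_space \<Rightarrow> 'a \<Rightarrow> 'a) \<Rightarrow> bool" where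
  "nilpotent_lie br \<longleftrightarrow> (\<exists>k. lower_central br k = {0})"

definition abelian_lie :: "('a::euclidean_space \<Rightarrow> 'a \<Rightarrow> 'a) \<Rightarrow> bool" where
  "abelian_lie br \<longleftrightarrow> (\<forall>x y. br x y = 0)"

definition quadratic_lie ::
  "('a::euclidean_space \<Rightarrow> 'a \<Rightarrow> 'a) \<Rightarrow> ('a \<Rightarrow> 'a \<Rightarrow> real) \<Rightarrow> bool" where
  "quadratic_lie br B \<longleftrightarrow> lie_algebra br \<and> bilinear B \<and> (\<forall>u v. B u v = B v u) \<and>
     (\<forall>u. (\<forall>v. B u v = 0) \<longrightarrow> u = 0) \<and>
     (\<forall>u v w. B (br u v) w + B (br u w) v = 0)"

definition lie_subalgebra :: "('a::euclidean_space \<Rightarrow> 'a \<Rightarrow> 'a) \<Rightarrow> 'a set \<Rightarrow> bool" where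
  "lie_subalgebra br h \<longleftrightarrow> subspace h \<and> (\<forall>u\<in>h. \<forall>v\<in>h. br u v \<in> h)"

definition form_kernel :: "('a \<Rightarrow> 'a \<Rightarrow> real) \<Rightarrow> 'a set" where
  "form_kernel \<theta> = {u. \<forall>v. \<theta> u v = 0}"

definition k_symplectic_structure ::
  "('a::euclidean_space \<Rightarrow> 'a \<Rightarrow> 'a) \<Rightarrow> nat \<Rightarrow> 'a set \<Rightarrow> (nat \<Rightarrow> 'a \<Rightarrow> 'a \<Rightarrow> real) \<Rightarrow> bool" where
  "k_symplectic_structure br k h \<theta> \<longleftrightarrow>
     (\<exists>m. m \<ge> 1 \<and> k \<ge> 1 \<and> DIM('a) = m * (k + 1) \<and>
        lie_subalgebra br h \<and> dim h = m * k \<and>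
        (\<forall>i\<in>{1..k}. bilinear (\<theta> i) \<and> (\<forall>u v. \<theta> i u v = - \<theta> i v u)) \<and>
        (\<Inter>i\<in>{1..k}. form_kernel (\<theta> i)) = {0} \<and>
        (\<forall>i\<in>{1..k}. \<forall>u v w.
            \<theta> i (br u v) w + \<theta> i (br v w) u + \<theta> i (br w u) v = 0) \<and>
        (\<forall>i\<in>{1..k}. \<forall>u\<in>h. \<forall>v\<in>h. \<theta> i u v = 0))"

definition admits_k_symplectic :: "('a::euclidean_space \<Rightarrow> 'a \<Rightarrow> 'a) \<Rightarrow> nat \<Rightarrow> bool" where
  "admits_k_symplectic br k \<longleftrightarrow> (\<exists>h \<theta>. k_symplectic_structure br k h \<theta>)"

end

theory Submission
  imports Defs
begin

lemma theta_decomp: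
  fixes t :: "'a::euclidean_space \<Rightarrow> 'a \<Rightarrow> real"
  assumes "bilinear t" "y - c *\<^sub>R e \<in> h" "\<forall>a\<in>h. \<forall>b\<in>h. t a b = 0" "z \<in> h"
  shows "t y z = c * t e z"
proof -
  have g: "t (c *\<^sub>R e + d) z = c * t e z + t d z" for d
    using assms(1) by (simp add: bilinear_ladd bilinear_lmul)
  have "t y z = t (c *\<^sub>R e + (y - c *\<^sub>R e)) z" by simp
  also have "\<dots> = c * t e z + t (y - c *\<^sub>R e) z" by (rule g)
  also have "t (y - c *\<^sub>R e) z = 0" using assms by blast
  finally show ?thesis by simp
qed

theorem mainTheorem3:
  fixes br :: "'a::euclidean_space \<Rightarrow> 'a \<Rightarrow> 'a"
    and B :: "'a \<Rightarrow> 'a \<Rightarrow> real"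
  assumes "quadratic_lie br B"
    and "nilpotent_lie br"
    and "admits_k_symplectic br (DIM('a) - 1)"
  shows "abelian_lie br"
proof -
  let ?n = "DIM('a)"
  let ?k = "DIM('a) - 1"
  from assms(3) obtain h \<theta> m where m1: "m \<ge> 1" and k1: "?k \<ge> 1"
    and dimeq: "?n = m * (?k + 1)" and sub: "lie_subalgebra br h" and dimh: "dim h = m * ?k"
    and bil: "\<forall>i\<in>{1..?k}. bilinear (\<theta> i) \<and> (\<forall>u v. \<theta> i u v = - \<theta> i v u)"
    and ker: "(\<Inter>i\<in>{1..?k}. form_kernel (\<theta> i)) = {0}"
    and coc: "\<forall>i\<in>{1..?k}. \<forall>u v w. \<theta> i (br u v) w + \<theta> i (br v w) u + \<theta> i (br w u) v = 0"
    and van: "\<forall>i\<in>{1..?k}. \<forall>u\<in>h. \<forall>v\<in>h. \<theta> i u v = 0"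
    unfolding admits_k_symplectic_def k_symplectic_structure_def by blast
  have kn: "?k + 1 = ?n" using k1 by simp
  have "?n = m * ?n" using dimeq kn by metis
  then have "m = 1" by simp
  then have dimh': "dim h = ?n - 1" using dimh by simp
  have subh: "subspace h" and clos: "\<forall>u\<in>h. \<forall>v\<in>h. br u v \<in> h"
    using sub unfolding lie_subalgebra_def by auto
  have spanh: "span h = h" using subh by (simp add: span_eq_iff)
  have "h \<noteq> UNIV"
  proof
    assume "h = UNIV"
    then have "dim h = ?n" by simp
    then have "?n - 1 = ?n" using dimh' by simp
    then show False using k1 by linarith
  qed
  then obtain e where e: "e \<notin> h" by blast
  have "dim (insert e h) = ?n" using dimh' k1 e spanh by (simp add: dim_insert del: span_eq_iff)
  then have spanI: "span (insert e h) = UNIV" using dim_eq_full by blast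
  have dec: "\<exists>c. x - c *\<^sub>R e \<in> h" for x
    using spanI span_breakdown_eq[of x e h] spanh by auto
  define co where "co x = (SOME c. x - c *\<^sub>R e \<in> h)" for x
  have co: "x - co x *\<^sub>R e \<in> h" for x
    unfolding co_def using someI_ex[OF dec] .
  have lie: "lie_algebra br" and bilB: "bilinear B" and symB: "\<forall>u v. B u v = B v u"
    and nd: "\<forall>u. (\<forall>v. B u v = 0) \<longrightarrow> u = 0"
    and inv: "\<forall>u v w. B (br u v) w + B (br u w) v = 0"
    using assms(1) unfolding quadratic_lie_def by auto
  have bilbr: "bilinear br" and alt: "\<And>x. br x x = 0"
    using lie unfolding lie_algebra_def by auto
  have skew: "br x y = - br y x" for x y
  proof -
    have "br (x+y) (x+y) = br x x + br x y + br y x + br y y"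
      using bilbr by (simp add: bilinear_ladd bilinear_radd)
    then show ?thesis using alt by (simp add: eq_neg_iff_add_eq_0)
  qed
  have claim1: "br u v = co (br e u) *\<^sub>R v - co (br e v) *\<^sub>R u" if u: "u \<in> h" and v: "v \<in> h" for u v
  proof -
    define w where "w = br u v - co (br e u) *\<^sub>R v + co (br e v) *\<^sub>R u"
    have wh: "w \<in> h" unfolding w_def using u v clos subh
      by (simp add: subspace_add subspace_diff subspace_mul)
    have "w \<in> form_kernel (\<theta> i)" if i: "i \<in> {1..?k}" for i
    proof -
      let ?t = "\<theta> i"
      have bt: "bilinear ?t" and sk: "\<And>a b. ?t a b = - ?t b a" using bil i by blast+
      have vt: "\<forall>a\<in>h. \<forall>b\<in>h. ?t a b = 0" using van i by auto
      have c: "?t (br u v) e + ?t (br v e) u + ?t (br e u) v = 0" using coc i by blast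
      have c1: "?t (br u v) e = - ?t e (br u v)" using sk by blast
      have c2: "?t (br v e) u = - (co (br e v) * ?t e u)"
      proof -
        have "?t (br v e) u = ?t (- br e v) u" using skew[of v e] by simp
        also have "\<dots> = - ?t (br e v) u" using bt by (simp add: bilinear_lneg)
        also have "?t (br e v) u = co (br e v) * ?t e u"
          using theta_decomp[OF bt co vt u] .
        finally show ?thesis .
      qed
      have c3: "?t (br e u) v = co (br e u) * ?t e v"
        using theta_decomp[OF bt co vt v] .
      have tew: "?t e w = 0"
        unfolding w_def using bt c c1 c2 c3
        by (simp add: bilinear_radd bilinear_rsub bilinear_rmul)
      have "?t z w = 0" for z
      proof -
        have "?t z w = co z * ?t e w" using theta_decomp[OF bt co vt wh] .
        then show ?thesis using tew by simp
      qed
      then have "\<forall>v. ?t w v = 0" using sk by (metis neg_equal_0_iff_equal)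
      then show ?thesis unfolding form_kernel_def by simp
    qed
    then have "w \<in> (\<Inter>i\<in>{1..?k}. form_kernel (\<theta> i))" by blast
    then have "w = 0" using ker by blast
    then show ?thesis unfolding w_def by (simp add: algebra_simps)
  qed
  obtain N where N: "lower_central br N = {0}" using assms(2) unfolding nilpotent_lie_def by blast
  have claim2: "br u v = 0" if u: "u \<in> h" and v: "v \<in> h" for u v
  proof (rule ccontr)
    assume ne: "br u v \<noteq> 0"
    let ?x = "br u v"
    have x: "?x = co (br e u) *\<^sub>R v - co (br e v) *\<^sub>R u" using claim1 u v .
    have ux: "br u ?x = co (br e u) *\<^sub>R ?x"
      using x alt bilbr by (simp add: bilinear_rsub bilinear_rmul)
    have vx: "br v ?x = co (br e v) *\<^sub>R ?x"
    proof -
      have "br v ?x = - co (br e v) *\<^sub>R br v u"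
        using x alt bilbr by (simp add: bilinear_rsub bilinear_rmul)
      then show ?thesis using skew[of v u] by simp
    qed
    obtain a c where ac: "br a ?x = c *\<^sub>R ?x" "c \<noteq> 0"
    proof (cases "co (br e u) = 0")
      case True
      then have "co (br e v) \<noteq> 0" using x ne by simp
      then show ?thesis using that vx by blast
    next
      case False
      then show ?thesis using that ux by blast
    qed
    have "?x \<in> lower_central br j" for j
    proof (induction j)
      case 0 then show ?case by simp
    next
      case (Suc j)
      have "br a ?x \<in> {br x y | x y. y \<in> lower_central br j}" using Suc by blast
      then have "br a ?x \<in> lower_central br (Suc j)" by (simp add: span_base)
      then have "(1/c) *\<^sub>R br a ?x \<in> lower_central br (Suc j)" by (simp add: span_mul)
      then show ?case using ac by simp
    qed
    then show False using N ne by blast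
  qed
  have cyc: "B (br a b) c = B (br b c) a" for a b c
  proof -
    have "B (br a b) c + B (br a c) b = 0" using inv by blast
    then have "B (br a b) c = - B (br a c) b" by linarith
    also have "br a c = - br c a" by (rule skew)
    also have "- B (- br c a) b = B (br c a) b" using bilB by (simp add: bilinear_lneg)
    also have "\<dots> = - B (br c b) a"
    proof -
      have "B (br c a) b + B (br c b) a = 0" using inv by blast
      then show ?thesis by linarith
    qed
    also have "br c b = - br b c" by (rule skew)
    also have "- B (- br b c) a = B (br b c) a" using bilB by (simp add: bilinear_lneg)
    finally show ?thesis .
  qed
  have Bee: "B (br e v) e = 0" for v
  proof -
    have "B (br e v) e + B (br e e) v = 0" using inv by blast
    then show ?thesis using alt bilB by (simp add: bilinear_lzero)
  qed
  have expand: "br (a *\<^sub>R e + p) (b *\<^sub>R e + q) = a *\<^sub>R b *\<^sub>R br e e + a *\<^sub>R br e q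
        + b *\<^sub>R br p e + br p q" for a b p q
    using bilbr by (simp add: bilinear_ladd bilinear_radd bilinear_lmul bilinear_rmul algebra_simps)
  have claim3: "B (br x y) e = 0" for x y
  proof -
    have "br x y = br (co x *\<^sub>R e + (x - co x *\<^sub>R e)) (co y *\<^sub>R e + (y - co y *\<^sub>R e))" by simp
    also have "\<dots> = co x *\<^sub>R co y *\<^sub>R br e e + co x *\<^sub>R br e (y - co y *\<^sub>R e)
        + co y *\<^sub>R br (x - co x *\<^sub>R e) e + br (x - co x *\<^sub>R e) (y - co y *\<^sub>R e)"
      by (rule expand)
    also have "\<dots> = co x *\<^sub>R br e (y - co y *\<^sub>R e) - co y *\<^sub>R br e (x - co x *\<^sub>R e)"
      using alt[of e] claim2[OF co co] skew[of "x - co x *\<^sub>R e" e] by simp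
    finally have "br x y = co x *\<^sub>R br e (y - co y *\<^sub>R e) - co y *\<^sub>R br e (x - co x *\<^sub>R e)" .
    then show ?thesis using bilB Bee by (simp add: bilinear_lsub bilinear_lmul)
  qed
  have claim4: "br e w = 0" for w
  proof -
    have "B (br e w) z = 0" for z using cyc[of e w z] claim3[of w z] by simp
    then show ?thesis using nd by blast
  qed
  show ?thesis unfolding abelian_lie_def
  proof (intro allI)
    fix x y
    have "br x y = br (co x *\<^sub>R e + (x - co x *\<^sub>R e)) (co y *\<^sub>R e + (y - co y *\<^sub>R e))" by simp
    also have "\<dots> = co x *\<^sub>R co y *\<^sub>R br e e + co x *\<^sub>R br e (y - co y *\<^sub>R e)
        + co y *\<^sub>R br (x - co x *\<^sub>R e) e + br (x - co x *\<^sub>R e) (y - co y *\<^sub>R e)"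
      by (rule expand)
    also have "\<dots> = 0"
      using claim4[of e] claim4[of "y - co y *\<^sub>R e"] claim2[OF co co]
        skew[of "x - co x *\<^sub>R e" e] claim4[of "x - co x *\<^sub>R e"] by simp
    finally show "br x y = 0" .
  qed
qed

end
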